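(* Let $G$ be a finite group such that every nontrivial Sylow subgroup of $G/G'$ is noncyclic, and let $N$ be a normal subgroup of $G$ such that $\eta(G) = \eta(G/N)$. Then $N \le G'$.
   Context: All groups are finite. A cyclic subgroup $C$ of a group $G$ is maximal cyclic if there is no cyclic subgroup $D$ of $G$ with $C < D$. $\eta(G)$ denotes the number of conjugacy classes of maximal cyclic subgroups of $G$. $G'$ is the derived subgroup of $G$. *)

theory Defs
  imports "HOL-Algebra.Algebra"
begin

definition cyclic_subgroup :: "('a, 'b) monoid_scheme \<Rightarrow> 'a set \<Rightarrow> bool" where
  "cyclic_subgroup G C \<longleftrightarrow> (\<exists>x \<in> carrier G. C = generate G {x})"

definition maximal_cyclic :: "('a, 'b) monoid_scheme \<Rightarrow> 'a set \<Rightarrow> bool" where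
  "maximal_cyclic G C \<longleftrightarrow> cyclic_subgroup G C \<and> \<not> (\<exists>D. cyclic_subgroup G D \<and> C \<subset> D)"

definition conj_class_subsets :: "('a, 'b) monoid_scheme \<Rightarrow> 'a set \<Rightarrow> 'a set set" where
  "conj_class_subsets G H = {(\<lambda>h. g \<otimes>\<^bsub>G\<^esub> h \<otimes>\<^bsub>G\<^esub> inv\<^bsub>G\<^esub> g) ` H | g. g \<in> carrier G}"

definition eta :: "('a, 'b) monoid_scheme \<Rightarrow> nat" where
  "eta G = card (conj_class_subsets G ` {C. maximal_cyclic G C})"

definition sylow_subgroup :: "('a, 'b) monoid_scheme \<Rightarrow> nat \<Rightarrow> 'a set \<Rightarrow> bool" where
  "sylow_subgroup G p P \<longleftrightarrow> Factorial_Ring.prime p \<and> subgroup P G \<and>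
     card P = p ^ Factorial_Ring.multiplicity p (order G)"

end

theory Submission
  imports Defs
begin


definition conjs :: "('a, 'b) monoid_scheme \<Rightarrow> 'a \<Rightarrow> 'a set \<Rightarrow> 'a set" where
  "conjs G g H = (\<lambda>h. g \<otimes>\<^bsub>G\<^esub> h \<otimes>\<^bsub>G\<^esub> inv\<^bsub>G\<^esub> g) ` H"

lemma cc_alt: "conj_class_subsets G H = {conjs G g H | g. g \<in> carrier G}"
  unfolding conj_class_subsets_def conjs_def by simp

context group begin

lemma gen_mem: "a \<in> carrier G \<Longrightarrow> y \<in> generate G {a} \<longleftrightarrow> (\<exists>k::int. y = a [^] k)"
  using generate_pow by auto

lemma inv_cancel_mid: "a \<in> carrier G \<Longrightarrow> g \<in> carrier G \<Longrightarrow> b \<in> carrier G \<Longrightarrow> a \<otimes> inv g \<otimes> (g \<otimes> b) = a \<otimes> b"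
  by (metis inv_closed l_inv m_assoc m_closed r_one)

lemma conj_hom: "g \<in> carrier G \<Longrightarrow> (\<lambda>h. g \<otimes> h \<otimes> inv g) \<in> hom G G"
  unfolding hom_def
proof (intro CollectI conjI ballI)
  fix x y assume a: "g \<in> carrier G" "x \<in> carrier G" "y \<in> carrier G"
  have "g \<otimes> x \<otimes> inv g \<otimes> (g \<otimes> y \<otimes> inv g) = g \<otimes> x \<otimes> inv g \<otimes> (g \<otimes> (y \<otimes> inv g))"
    using a by (simp add: m_assoc)
  also have "\<dots> = g \<otimes> x \<otimes> (y \<otimes> inv g)" using a by (simp add: inv_cancel_mid)
  finally show "g \<otimes> (x \<otimes> y) \<otimes> inv g = g \<otimes> x \<otimes> inv g \<otimes> (g \<otimes> y \<otimes> inv g)"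
    using a by (simp add: m_assoc)
qed (auto simp: Pi_def)

lemma conj_pow: "g \<in> carrier G \<Longrightarrow> x \<in> carrier G \<Longrightarrow> g \<otimes> x [^] (k::int) \<otimes> inv g = (g \<otimes> x \<otimes> inv g) [^] k"
  using hom_int_pow[OF conj_hom, of g x k] is_group by simp

lemma conjs_gen: "g \<in> carrier G \<Longrightarrow> x \<in> carrier G \<Longrightarrow> conjs G g (generate G {x}) = generate G {g \<otimes> x \<otimes> inv g}"
proof -
  assume a: "g \<in> carrier G" "x \<in> carrier G"
  show ?thesis unfolding conjs_def
  proof (intro equalityI subsetI)
    fix y assume "y \<in> (\<lambda>h. g \<otimes> h \<otimes> inv g) ` generate G {x}"
    then obtain k where "y = g \<otimes> x [^] (k::int) \<otimes> inv g" using a gen_mem by auto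
    then show "y \<in> generate G {g \<otimes> x \<otimes> inv g}" using a gen_mem conj_pow by auto
  next
    fix y assume "y \<in> generate G {g \<otimes> x \<otimes> inv g}"
    then obtain k where "y = (g \<otimes> x \<otimes> inv g) [^] (k::int)" using a gen_mem by auto
    then have "y = g \<otimes> x [^] k \<otimes> inv g" using a conj_pow by auto
    moreover have "x [^] k \<in> generate G {x}" using a gen_mem by auto
    ultimately show "y \<in> (\<lambda>h. g \<otimes> h \<otimes> inv g) ` generate G {x}" by blast
  qed
qed

lemma conjs_sub: "g \<in> carrier G \<Longrightarrow> C \<subseteq> carrier G \<Longrightarrow> conjs G g C \<subseteq> carrier G"
  unfolding conjs_def by auto

lemma conjs_comp: "g \<in> carrier G \<Longrightarrow> h \<in> carrier G \<Longrightarrow> C \<subseteq> carrier G \<Longrightarrow> conjs G g (conjs G h C) = conjs G (g \<otimes> h) C"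
  unfolding conjs_def image_image
  by (intro image_cong refl) (auto simp: m_assoc inv_mult_group subsetD)

lemma conjs_one: "C \<subseteq> carrier G \<Longrightarrow> conjs G \<one> C = C"
  unfolding conjs_def by (auto simp: subsetD image_iff)

lemma conjs_inv: "g \<in> carrier G \<Longrightarrow> C \<subseteq> carrier G \<Longrightarrow> conjs G (inv g) (conjs G g C) = C"
  by (simp add: conjs_comp conjs_one)

lemma conjs_mono_strict: "g \<in> carrier G \<Longrightarrow> D \<subseteq> carrier G \<Longrightarrow> C \<subset> D \<Longrightarrow> conjs G g C \<subset> conjs G g D"
proof -
  assume a: "g \<in> carrier G" "D \<subseteq> carrier G" "C \<subset> D"
  have "conjs G g C \<subseteq> conjs G g D" using a unfolding conjs_def by auto
  moreover have "conjs G g C \<noteq> conjs G g D"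
  proof
    assume "conjs G g C = conjs G g D"
    then have "conjs G (inv g) (conjs G g C) = conjs G (inv g) (conjs G g D)" by simp
    then show False using a conjs_inv[of g C] conjs_inv[of g D] by auto
  qed
  ultimately show ?thesis by blast
qed

lemma cyclic_sub: "cyclic_subgroup G C \<Longrightarrow> C \<subseteq> carrier G"
  unfolding cyclic_subgroup_def using generate_incl by blast

lemma cyclic_conjs: "g \<in> carrier G \<Longrightarrow> cyclic_subgroup G C \<Longrightarrow> cyclic_subgroup G (conjs G g C)"
  unfolding cyclic_subgroup_def using conjs_gen by auto

lemma maxcyc_conjs: "g \<in> carrier G \<Longrightarrow> maximal_cyclic G C \<Longrightarrow> maximal_cyclic G (conjs G g C)"
proof -
  assume a: "g \<in> carrier G" "maximal_cyclic G C"
  have cC: "cyclic_subgroup G C" using a unfolding maximal_cyclic_def by blast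
  show ?thesis unfolding maximal_cyclic_def
  proof (intro conjI notI)
    show "cyclic_subgroup G (conjs G g C)" using cyclic_conjs a cC by blast
    assume "\<exists>D. cyclic_subgroup G D \<and> conjs G g C \<subset> D"
    then obtain D where D: "cyclic_subgroup G D" "conjs G g C \<subset> D" by blast
    have "conjs G (inv g) (conjs G g C) \<subset> conjs G (inv g) D"
      using conjs_mono_strict[of "inv g" D] D cyclic_sub a by auto
    then have "C \<subset> conjs G (inv g) D" using conjs_inv a cC cyclic_sub by auto
    moreover have "cyclic_subgroup G (conjs G (inv g) D)" using cyclic_conjs D a by auto
    ultimately show False using a unfolding maximal_cyclic_def by blast
  qed
qed

lemma cc_conjs: "C \<subseteq> carrier G \<Longrightarrow> D \<in> conj_class_subsets G C \<Longrightarrow> conj_class_subsets G D = conj_class_subsets G C"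
proof -
  assume a: "C \<subseteq> carrier G" "D \<in> conj_class_subsets G C"
  then obtain g where g: "g \<in> carrier G" "D = conjs G g C" unfolding cc_alt by blast
  show ?thesis unfolding cc_alt
  proof (intro equalityI subsetI)
    fix Y assume "Y \<in> {conjs G h D |h. h \<in> carrier G}"
    then obtain h where "h \<in> carrier G" "Y = conjs G h D" by blast
    then have "Y = conjs G (h \<otimes> g) C" using g a conjs_comp by auto
    then show "Y \<in> {conjs G g C |g. g \<in> carrier G}" using \<open>h \<in> carrier G\<close> g by blast
  next
    fix Y assume "Y \<in> {conjs G h C |h. h \<in> carrier G}"
    then obtain h where h: "h \<in> carrier G" "Y = conjs G h C" by blast
    have "conjs G (h \<otimes> inv g) D = conjs G h C"
      using g a conjs_comp[of "h \<otimes> inv g" g C] h by (simp add: m_assoc)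
    then show "Y \<in> {conjs G g D |g. g \<in> carrier G}" using h g by blast
  qed
qed

lemma cc_self: "C \<subseteq> carrier G \<Longrightarrow> C \<in> conj_class_subsets G C"
proof -
  assume "C \<subseteq> carrier G"
  then have "C = conjs G \<one> C" using conjs_one by simp
  then show ?thesis unfolding cc_alt using one_closed by blast
qed

lemma maxcyc_exists:
  assumes fin: "finite (carrier G)" and x: "x \<in> carrier G"
  shows "\<exists>M. maximal_cyclic G M \<and> generate G {x} \<subseteq> M"
proof -
  have "\<forall>C. cyclic_subgroup G C \<and> card (carrier G) - card C = n \<longrightarrow> (\<exists>M. maximal_cyclic G M \<and> C \<subseteq> M)" for n
  proof (induction n rule: less_induct)
    case (less n)
    show ?case
    proof (intro allI impI)
      fix C assume C: "cyclic_subgroup G C \<and> card (carrier G) - card C = n"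
      show "\<exists>M. maximal_cyclic G M \<and> C \<subseteq> M"
      proof (cases "maximal_cyclic G C")
        case True then show ?thesis by blast
      next
        case False
        then obtain D where D: "cyclic_subgroup G D" "C \<subset> D" using C unfolding maximal_cyclic_def by blast
        have "D \<subseteq> carrier G" using D cyclic_sub by blast
        have fD: "finite D" using \<open>D \<subseteq> carrier G\<close> fin finite_subset by blast
        have "card C < card D" using psubset_card_mono[OF fD D(2)] .
        moreover have "card D \<le> card (carrier G)" using card_mono[OF fin \<open>D \<subseteq> carrier G\<close>] .
        ultimately have "card (carrier G) - card D < n" using C by linarith
        then obtain M where "maximal_cyclic G M" "D \<subseteq> M" using less.IH[of "card (carrier G) - card D"] D(1) by blast
        then show ?thesis using D by blast
      qed
    qed
  qed
  moreover have "cyclic_subgroup G (generate G {x})" using x unfolding cyclic_subgroup_def by blast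
  ultimately show ?thesis by blast
qed

end


lemma count_lemma:
  assumes fc: "\<forall>x\<in>S. \<forall>y\<in>S. f x = f y \<longrightarrow> h x = h y"
    and ff: "finite (f ` S)" and K: "K \<subseteq> h ` S" and cK: "card K = card (f ` S)"
  shows "h ` S = K \<and> (\<forall>x\<in>S. \<forall>y\<in>S. h x = h y \<longrightarrow> f x = f y)"
proof -
  define H where "H k = h (SOME x. x \<in> S \<and> f x = k)" for k
  have Hf: "H (f x) = h x" if "x \<in> S" for x
  proof -
    have "\<exists>y. y \<in> S \<and> f y = f x" using that by blast
    then have "(SOME y. y \<in> S \<and> f y = f x) \<in> S \<and> f (SOME y. y \<in> S \<and> f y = f x) = f x"
      by (rule someI_ex)
    then have "h (SOME y. y \<in> S \<and> f y = f x) = h x" using fc that by blast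
    then show ?thesis unfolding H_def .
  qed
  have img: "h ` S = H ` (f ` S)" unfolding image_image using Hf by (intro image_cong refl) simp
  have fh: "finite (h ` S)" using img ff by simp
  have "card (h ` S) \<le> card (f ` S)" unfolding img using ff by (rule card_image_le)
  then have "card (h ` S) \<le> card K" using cK by simp
  then have eq: "K = h ` S" using card_seteq[OF fh K] by blast
  have "card (H ` (f ` S)) = card (f ` S)" using img eq cK by simp
  then have inj: "inj_on H (f ` S)" using eq_card_imp_inj_on ff by blast
  have "\<forall>x\<in>S. \<forall>y\<in>S. h x = h y \<longrightarrow> f x = f y"
  proof (intro ballI impI)
    fix x y assume "x \<in> S" "y \<in> S" "h x = h y"
    then have "H (f x) = H (f y)" using Hf[of x] Hf[of y] by argo
    moreover have "f x \<in> f ` S" "f y \<in> f ` S" using \<open>x \<in> S\<close> \<open>y \<in> S\<close> by auto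
    ultimately show "f x = f y" using inj_onD[OF inj] by blast
  qed
  moreover have "h ` S = K" using eq by (rule sym)
  ultimately show ?thesis by (intro conjI)
qed

lemma quot_gen:
  assumes "N \<lhd> G" "x \<in> carrier G"
  shows "(\<lambda>a. N #>\<^bsub>G\<^esub> a) ` generate G {x} = generate (G Mod N) {N #>\<^bsub>G\<^esub> x}"
proof -
  interpret N: normal N G by fact
  interpret Q: group "G Mod N" by (rule N.factorgroup_is_group)
  have hom: "(\<lambda>a. N #>\<^bsub>G\<^esub> a) \<in> hom G (G Mod N)" by (rule N.r_coset_hom_Mod)
  have xq: "N #>\<^bsub>G\<^esub> x \<in> carrier (G Mod N)" using hom assms(2) unfolding hom_def by blast
  have pw: "N #>\<^bsub>G\<^esub> (x [^]\<^bsub>G\<^esub> (k::int)) = (N #>\<^bsub>G\<^esub> x) [^]\<^bsub>G Mod N\<^esub> k" for k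
    using hom_int_pow[OF hom assms(2) N.is_group Q.is_group] .
  show ?thesis
    unfolding N.generate_pow[OF assms(2)] Q.generate_pow[OF xq]
  proof (intro equalityI subsetI)
    fix y assume "y \<in> (#>\<^bsub>G\<^esub>) N ` {x [^]\<^bsub>G\<^esub> (k::int) |k. k \<in> UNIV}"
    then obtain k where "y = N #>\<^bsub>G\<^esub> (x [^]\<^bsub>G\<^esub> (k::int))" by blast
    then show "y \<in> {(N #>\<^bsub>G\<^esub> x) [^]\<^bsub>G Mod N\<^esub> (k::int) |k. k \<in> UNIV}" using pw by blast
  next
    fix y assume "y \<in> {(N #>\<^bsub>G\<^esub> x) [^]\<^bsub>G Mod N\<^esub> (k::int) |k. k \<in> UNIV}"
    then obtain k where "y = N #>\<^bsub>G\<^esub> (x [^]\<^bsub>G\<^esub> (k::int))" using pw by auto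
    then show "y \<in> (#>\<^bsub>G\<^esub>) N ` {x [^]\<^bsub>G\<^esub> (k::int) |k. k \<in> UNIV}" by blast
  qed
qed

lemma quot_conjs:
  assumes "N \<lhd> G" "g \<in> carrier G" "C \<subseteq> carrier G"
  shows "(\<lambda>a. N #>\<^bsub>G\<^esub> a) ` conjs G g C = conjs (G Mod N) (N #>\<^bsub>G\<^esub> g) ((\<lambda>a. N #>\<^bsub>G\<^esub> a) ` C)"
proof -
  interpret N: normal N G by fact
  interpret Q: group "G Mod N" by (rule N.factorgroup_is_group)
  have hom: "(\<lambda>a. N #>\<^bsub>G\<^esub> a) \<in> hom G (G Mod N)" by (rule N.r_coset_hom_Mod)
  interpret h: group_hom G "G Mod N" "(\<lambda>a. N #>\<^bsub>G\<^esub> a)"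
    using hom by unfold_locales
  have e: "N #>\<^bsub>G\<^esub> (g \<otimes>\<^bsub>G\<^esub> c \<otimes>\<^bsub>G\<^esub> inv\<^bsub>G\<^esub> g) =
     (N #>\<^bsub>G\<^esub> g) \<otimes>\<^bsub>G Mod N\<^esub> (N #>\<^bsub>G\<^esub> c) \<otimes>\<^bsub>G Mod N\<^esub> inv\<^bsub>G Mod N\<^esub> (N #>\<^bsub>G\<^esub> g)"
    if "c \<in> carrier G" for c
    using that assms(2) by (simp add: h.hom_inv)
  show ?thesis unfolding conjs_def image_image
  proof (intro image_cong refl)
    fix c assume "c \<in> C"
    then show "N #>\<^bsub>G\<^esub> (g \<otimes>\<^bsub>G\<^esub> c \<otimes>\<^bsub>G\<^esub> inv\<^bsub>G\<^esub> g) =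
     (N #>\<^bsub>G\<^esub> g) \<otimes>\<^bsub>G Mod N\<^esub> (N #>\<^bsub>G\<^esub> c) \<otimes>\<^bsub>G Mod N\<^esub> inv\<^bsub>G Mod N\<^esub> (N #>\<^bsub>G\<^esub> g)"
      using e assms(3) by blast
  qed
qed

lemma quot_cyclic:
  assumes "N \<lhd> G" "cyclic_subgroup G M"
  shows "cyclic_subgroup (G Mod N) ((\<lambda>a. N #>\<^bsub>G\<^esub> a) ` M)"
proof -
  interpret N: normal N G by fact
  have hom: "(\<lambda>a. N #>\<^bsub>G\<^esub> a) \<in> hom G (G Mod N)" by (rule N.r_coset_hom_Mod)
  obtain x where x: "x \<in> carrier G" "M = generate G {x}" using assms(2) unfolding cyclic_subgroup_def by blast
  have xq: "N #>\<^bsub>G\<^esub> x \<in> carrier (G Mod N)" using hom x unfolding hom_def by blast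
  show ?thesis unfolding cyclic_subgroup_def using quot_gen[OF assms(1) x(1)] x xq by blast
qed



lemma maxcyc_sub: "group G \<Longrightarrow> maximal_cyclic G C \<Longrightarrow> C \<subseteq> carrier G"
  unfolding maximal_cyclic_def using group.cyclic_sub by metis

lemma cc_sub: "group G \<Longrightarrow> C \<subseteq> carrier G \<Longrightarrow> conj_class_subsets G C \<subseteq> Pow (carrier G)"
proof
  fix Y assume "group G" "C \<subseteq> carrier G" "Y \<in> conj_class_subsets G C"
  then obtain g where "g \<in> carrier G" "Y = conjs G g C" unfolding cc_alt by blast
  then show "Y \<in> Pow (carrier G)" using group.conjs_sub[OF \<open>group G\<close>] \<open>C \<subseteq> carrier G\<close> by simp
qed

lemma key_quot:
  assumes grp: "group G" and fin: "finite (carrier G)" and nN: "N \<lhd> G"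
    and eta: "eta G = eta (G Mod N)"
  shows "(\<forall>M. maximal_cyclic G M \<longrightarrow> maximal_cyclic (G Mod N) ((\<lambda>a. N #>\<^bsub>G\<^esub> a) ` M)) \<and>
         (\<forall>M1 M2. maximal_cyclic G M1 \<longrightarrow> maximal_cyclic G M2 \<longrightarrow>
            (\<lambda>a. N #>\<^bsub>G\<^esub> a) ` M1 = (\<lambda>a. N #>\<^bsub>G\<^esub> a) ` M2 \<longrightarrow> M2 \<in> conj_class_subsets G M1)"
proof -
  interpret N: normal N G by fact
  interpret Q: group "G Mod N" by (rule N.factorgroup_is_group)
  define \<pi> where "\<pi> = (\<lambda>a. N #>\<^bsub>G\<^esub> a)"
  have hom: "\<pi> \<in> hom G (G Mod N)" unfolding \<pi>_def by (rule N.r_coset_hom_Mod)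
  have \<pi>c: "\<pi> a \<in> carrier (G Mod N)" if "a \<in> carrier G" for a using hom that unfolding hom_def by blast
  have finQ: "finite (carrier (G Mod N))"
    unfolding FactGroup_def RCOSETS_def using fin by simp
  define S where "S = {C. maximal_cyclic G C}"
  define f where "f = conj_class_subsets G"
  define h where "h M = conj_class_subsets (G Mod N) (\<pi> ` M)" for M
  define K where "K = conj_class_subsets (G Mod N) ` {C. maximal_cyclic (G Mod N) C}"
  have \<pi>sub: "\<pi> ` M \<subseteq> carrier (G Mod N)" if "M \<in> S" for M
    using that maxcyc_sub[OF grp] \<pi>c unfolding S_def by blast
  have fc: "\<forall>x\<in>S. \<forall>y\<in>S. f x = f y \<longrightarrow> h x = h y"
  proof (intro ballI impI)
    fix x y assume xy: "x \<in> S" "y \<in> S" "f x = f y"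
    have xs: "x \<subseteq> carrier G" using xy maxcyc_sub[OF grp] unfolding S_def by blast
    have ys: "y \<subseteq> carrier G" using xy maxcyc_sub[OF grp] unfolding S_def by blast
    have "y \<in> f x" using xy N.cc_self[OF ys] unfolding f_def by simp
    then obtain g where g: "g \<in> carrier G" "y = conjs G g x" unfolding f_def cc_alt by blast
    have "\<pi> ` y = conjs (G Mod N) (\<pi> g) (\<pi> ` x)" unfolding g(2) \<pi>_def using quot_conjs[OF nN g(1) xs] .
    then have "\<pi> ` y \<in> conj_class_subsets (G Mod N) (\<pi> ` x)" unfolding cc_alt using \<pi>c g(1) by blast
    then have "conj_class_subsets (G Mod N) (\<pi> ` y) = conj_class_subsets (G Mod N) (\<pi> ` x)"
      by (rule Q.cc_conjs[OF \<pi>sub[OF xy(1)]])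
    then show "h x = h y" unfolding h_def by simp
  qed
  have ff: "finite (f ` S)"
  proof (rule finite_subset)
    show "f ` S \<subseteq> Pow (Pow (carrier G))"
    proof
      fix k assume "k \<in> f ` S"
      then obtain M where "maximal_cyclic G M" "k = conj_class_subsets G M" unfolding f_def S_def by blast
      then show "k \<in> Pow (Pow (carrier G))" using cc_sub[OF grp maxcyc_sub[OF grp]] by simp
    qed
  qed (use fin in simp)
  have KS: "K \<subseteq> h ` S"
  proof
    fix k assume "k \<in> K"
    then obtain D where D: "maximal_cyclic (G Mod N) D" "k = conj_class_subsets (G Mod N) D" unfolding K_def by blast
    then obtain q where q: "q \<in> carrier (G Mod N)" "D = generate (G Mod N) {q}"
      unfolding maximal_cyclic_def cyclic_subgroup_def by blast
    have "q \<in> rcosets\<^bsub>G\<^esub> N" using q(1) unfolding FactGroup_def by simp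
    then obtain x where x: "x \<in> carrier G" "q = \<pi> x" unfolding \<pi>_def RCOSETS_def by blast
    obtain M where M: "maximal_cyclic G M" "generate G {x} \<subseteq> M" using N.maxcyc_exists[OF fin x(1)] by blast
    have "D = \<pi> ` generate G {x}" unfolding q(2) x(2) \<pi>_def using quot_gen[OF nN x(1)] by simp
    then have DM: "D \<subseteq> \<pi> ` M" using M by blast
    have "cyclic_subgroup (G Mod N) (\<pi> ` M)" unfolding \<pi>_def
      using quot_cyclic[OF nN] M(1) unfolding maximal_cyclic_def by blast
    then have "\<not> D \<subset> \<pi> ` M" using D(1) unfolding maximal_cyclic_def by blast
    then have "D = \<pi> ` M" using DM by (simp add: psubset_eq)
    then have "k = h M" unfolding h_def D(2) by simp
    then show "k \<in> h ` S" using M unfolding S_def by blast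
  qed
  have cK: "card K = card (f ` S)" using eta unfolding eta_def K_def f_def S_def by simp
  have cl: "h ` S = K \<and> (\<forall>x\<in>S. \<forall>y\<in>S. h x = h y \<longrightarrow> f x = f y)"
    by (rule count_lemma[OF fc ff KS cK])
  have c1: "h ` S = K" using cl by (rule conjunct1)
  have c2: "\<forall>x\<in>S. \<forall>y\<in>S. h x = h y \<longrightarrow> f x = f y" using cl by (rule conjunct2)
  have part1: "maximal_cyclic (G Mod N) (\<pi> ` M)" if M: "maximal_cyclic G M" for M
  proof -
    have "h M \<in> K" using c1 M unfolding S_def by blast
    then obtain D where D: "maximal_cyclic (G Mod N) D" "h M = conj_class_subsets (G Mod N) D"
      unfolding K_def by blast
    have "\<pi> ` M \<in> h M" unfolding h_def using Q.cc_self \<pi>sub M unfolding S_def by blast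
    then have "\<pi> ` M \<in> conj_class_subsets (G Mod N) D" using D by simp
    then obtain g where g: "g \<in> carrier (G Mod N)" "\<pi> ` M = conjs (G Mod N) g D" unfolding cc_alt by blast
    show ?thesis unfolding g(2) using Q.maxcyc_conjs g(1) D(1) by blast
  qed
  have part2: "M2 \<in> conj_class_subsets G M1"
    if M: "maximal_cyclic G M1" "maximal_cyclic G M2" "\<pi> ` M1 = \<pi> ` M2" for M1 M2
  proof -
    have "h M1 = h M2" unfolding h_def using M by simp
    then have "f M1 = f M2" using c2 M unfolding S_def by blast
    moreover have "M2 \<in> conj_class_subsets G M2" by (rule N.cc_self[OF maxcyc_sub[OF grp M(2)]])
    ultimately show ?thesis unfolding f_def by simp
  qed
  show ?thesis unfolding \<pi>_def[symmetric]
  proof (intro conjI allI impI)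
    fix M assume "maximal_cyclic G M" then show "maximal_cyclic (G Mod N) (\<pi> ` M)" by (rule part1)
  next
    fix M1 M2 assume "maximal_cyclic G M1" "maximal_cyclic G M2" "\<pi> ` M1 = \<pi> ` M2"
    then show "M2 \<in> conj_class_subsets G M1" by (rule part2)
  qed
qed



lemma key_elem:
  assumes grp: "group G" and fin: "finite (carrier G)" and nN: "N \<lhd> G"
    and eta: "eta G = eta (G Mod N)" and a: "a \<in> carrier G"
  shows "\<exists>x\<in>carrier G. a \<in> generate G {x} \<and>
           (\<forall>n\<in>N. \<exists>g\<in>carrier G. \<exists>k::int. x \<otimes>\<^bsub>G\<^esub> n = g \<otimes>\<^bsub>G\<^esub> x [^]\<^bsub>G\<^esub> k \<otimes>\<^bsub>G\<^esub> inv\<^bsub>G\<^esub> g)"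
proof -
  interpret N: normal N G by fact
  interpret Q: group "G Mod N" by (rule N.factorgroup_is_group)
  define \<pi> where "\<pi> = (\<lambda>a. N #>\<^bsub>G\<^esub> a)"
  have hom: "\<pi> \<in> hom G (G Mod N)" unfolding \<pi>_def by (rule N.r_coset_hom_Mod)
  interpret h: group_hom G "G Mod N" \<pi>
    using hom by unfold_locales
  have KQ: "(\<forall>M. maximal_cyclic G M \<longrightarrow> maximal_cyclic (G Mod N) (\<pi> ` M)) \<and>
         (\<forall>M1 M2. maximal_cyclic G M1 \<longrightarrow> maximal_cyclic G M2 \<longrightarrow>
            \<pi> ` M1 = \<pi> ` M2 \<longrightarrow> M2 \<in> conj_class_subsets G M1)"
    unfolding \<pi>_def by (rule key_quot[OF grp fin nN eta])
  have KQ1: "maximal_cyclic (G Mod N) (\<pi> ` M)" if "maximal_cyclic G M" for M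
    using KQ[THEN conjunct1] that by simp
  have KQ2: "M2 \<in> conj_class_subsets G M1" if "maximal_cyclic G M1" "maximal_cyclic G M2" "\<pi> ` M1 = \<pi> ` M2" for M1 M2
    using KQ[THEN conjunct2] that by simp
  obtain M where M: "maximal_cyclic G M" "generate G {a} \<subseteq> M" using N.maxcyc_exists[OF fin a] by blast
  obtain x where x: "x \<in> carrier G" "M = generate G {x}"
    using M(1) unfolding maximal_cyclic_def cyclic_subgroup_def by (elim conjE bexE) simp
  have "a \<in> generate G {a}" using N.gen_mem[OF a] a by (metis N.int_pow_1)
  then have aM: "a \<in> generate G {x}" using M x by blast
  have main: "\<exists>g\<in>carrier G. \<exists>k::int. x \<otimes>\<^bsub>G\<^esub> n = g \<otimes>\<^bsub>G\<^esub> x [^]\<^bsub>G\<^esub> k \<otimes>\<^bsub>G\<^esub> inv\<^bsub>G\<^esub> g"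
    if n: "n \<in> N" for n
  proof -
    have nc: "n \<in> carrier G" using n N.subset by blast
    have xn: "x \<otimes>\<^bsub>G\<^esub> n \<in> carrier G" using x nc by simp
    obtain M' where M': "maximal_cyclic G M'" "generate G {x \<otimes>\<^bsub>G\<^esub> n} \<subseteq> M'"
      using N.maxcyc_exists[OF fin xn] by blast
    have "\<pi> n = \<one>\<^bsub>G Mod N\<^esub>" unfolding \<pi>_def using N.rcos_const[OF N.is_group n]
      by (simp add: FactGroup_def)
    have "\<pi> (x \<otimes>\<^bsub>G\<^esub> n) = \<pi> x \<otimes>\<^bsub>G Mod N\<^esub> \<pi> n" by (rule h.hom_mult[OF x(1) nc])
    also have "\<dots> = \<pi> x \<otimes>\<^bsub>G Mod N\<^esub> \<one>\<^bsub>G Mod N\<^esub>" using \<open>\<pi> n = \<one>\<^bsub>G Mod N\<^esub>\<close> by simp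
    also have "\<dots> = \<pi> x" using Q.r_one h.hom_closed[OF x(1)] by blast
    finally have pxn: "\<pi> (x \<otimes>\<^bsub>G\<^esub> n) = \<pi> x" .
    have "\<pi> ` M = generate (G Mod N) {\<pi> x}" unfolding x(2) \<pi>_def by (rule quot_gen[OF nN x(1)])
    also have "\<dots> = generate (G Mod N) {\<pi> (x \<otimes>\<^bsub>G\<^esub> n)}" using pxn by simp
    also have "\<dots> = \<pi> ` generate G {x \<otimes>\<^bsub>G\<^esub> n}" unfolding \<pi>_def
      by (rule quot_gen[OF nN xn, symmetric])
    finally have eqM: "\<pi> ` M = \<pi> ` generate G {x \<otimes>\<^bsub>G\<^esub> n}" .
    have sub: "\<pi> ` M \<subseteq> \<pi> ` M'" unfolding eqM by (rule image_mono[OF M'(2)])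
    have mx: "maximal_cyclic (G Mod N) (\<pi> ` M)" using KQ1 M(1) by blast
    have cy: "cyclic_subgroup (G Mod N) (\<pi> ` M')" unfolding \<pi>_def
      using quot_cyclic[OF nN] M'(1) unfolding maximal_cyclic_def by blast
    have "\<not> \<pi> ` M \<subset> \<pi> ` M'" using mx cy unfolding maximal_cyclic_def by blast
    then have "\<pi> ` M = \<pi> ` M'" using sub by (simp add: psubset_eq)
    then have "M' \<in> conj_class_subsets G M" using KQ2 M(1) M'(1) by blast
    then obtain g where g: "g \<in> carrier G" "M' = conjs G g M" unfolding cc_alt by blast
    have "x \<otimes>\<^bsub>G\<^esub> n \<in> generate G {x \<otimes>\<^bsub>G\<^esub> n}" using N.gen_mem[OF xn] xn by (metis N.int_pow_1)
    then have "x \<otimes>\<^bsub>G\<^esub> n \<in> conjs G g M" using M' g by blast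
    then obtain y where y: "y \<in> generate G {x}" "x \<otimes>\<^bsub>G\<^esub> n = g \<otimes>\<^bsub>G\<^esub> y \<otimes>\<^bsub>G\<^esub> inv\<^bsub>G\<^esub> g"
      unfolding conjs_def x(2) by blast
    obtain k where "y = x [^]\<^bsub>G\<^esub> (k::int)" using y(1) N.gen_mem[OF x(1)] by blast
    then show ?thesis using y(2) g(1) by blast
  qed
  show ?thesis using x(1) aM main by blast
qed



lemma nt_lemma:
  fixes n i j p :: int
  assumes p: "Factorial_Ring.prime p" and h1: "n dvd i * p" and h2: "n dvd j * p" and h3: "\<not> n dvd j"
  shows "\<exists>u. n dvd (i - j * u)"
proof -
  have pn: "p dvd n"
  proof (rule ccontr)
    assume "\<not> p dvd n"
    then have "coprime p n" using p by (rule prime_imp_coprime[rotated])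
    then have "coprime n p" by (simp add: coprime_commute)
    then have "n dvd j" using h2 coprime_dvd_mult_left_iff by blast
    then show False using h3 by simp
  qed
  then obtain r where r: "n = p * r" by (auto elim: dvdE)
  have p0: "p \<noteq> 0" using p by auto
  have "p * r dvd p * j" using h2 r by (simp add: mult.commute)
  then have "r dvd j" using p0 by simp
  then obtain j' where j': "j = r * j'" by (auto elim: dvdE)
  have "p * r dvd p * i" using h1 r by (simp add: mult.commute)
  then have "r dvd i" using p0 by simp
  then obtain i' where i': "i = r * i'" by (auto elim: dvdE)
  have "\<not> p dvd j'"
  proof
    assume "p dvd j'"
    then have "p * r dvd r * j'" by (simp add: mult.commute)
    then show False using h3 r j' by simp
  qed
  then have "coprime p j'" using p by (rule prime_imp_coprime[rotated])
  then have "coprime j' p" by (simp add: coprime_commute)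
  then obtain u v where uv: "u * j' + v * p = 1" using bezout_int[of j' p] by auto
  have "i - j * (u * i') = r * i' * (1 - u * j')" unfolding i' j' by (simp add: algebra_simps)
  also have "\<dots> = n * (i' * v)"
  proof -
    have e: "1 - u * j' = v * p" using uv by simp
    show ?thesis unfolding e r by (simp add: algebra_simps)
  qed
  finally have "n dvd (i - j * (u * i'))" by (simp add: dvdI)
  then show ?thesis by blast
qed

context group begin

lemma Z_lemma:
  assumes p: "Factorial_Ring.prime (p::nat)" and xi: "\<xi> \<in> carrier G"
    and z: "z \<in> generate G {\<xi>}" and w: "w \<in> generate G {\<xi>}"
    and zp: "z [^] (int p) = \<one>" and wp: "w [^] (int p) = \<one>" and w1: "w \<noteq> \<one>"
  shows "z \<in> generate G {w}"
proof -
  obtain i where i: "z = \<xi> [^] (i::int)" using z gen_mem[OF xi] by blast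
  obtain j where j: "w = \<xi> [^] (j::int)" using w gen_mem[OF xi] by blast
  let ?n = "int (ord \<xi>)"
  have "\<xi> [^] (i * int p) = \<one>" using zp i int_pow_pow[OF xi] by simp
  then have h1: "?n dvd i * int p" using int_pow_eq_id[OF xi] by simp
  have "\<xi> [^] (j * int p) = \<one>" using wp j int_pow_pow[OF xi] by simp
  then have h2: "?n dvd j * int p" using int_pow_eq_id[OF xi] by simp
  have h3: "\<not> ?n dvd j" using w1 j int_pow_eq_id[OF xi] by simp
  have pi: "Factorial_Ring.prime (int p)" using p by simp
  obtain u where u: "?n dvd (i - j * u)" using nt_lemma[OF pi h1 h2 h3] by blast
  have "w [^] u = \<xi> [^] (j * u)" using j int_pow_pow[OF xi] by simp
  also have "\<dots> = \<xi> [^] i" using int_pow_eq[OF xi] u by simp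
  finally have "z = w [^] u" using i by simp
  moreover have wc: "w \<in> carrier G" using j xi by simp
  ultimately show ?thesis using gen_mem[OF wc] by blast
qed

end


context comm_group begin

lemma tower:
  assumes p: "Factorial_Ring.prime (p::nat)" and x: "x \<in> carrier G"
    and ordx: "ord x = p ^ m"
    and star: "\<And>z. z \<in> carrier G \<Longrightarrow> z [^] (int p) = \<one> \<Longrightarrow> z \<in> generate G {b}"
    and b: "b \<in> carrier G"
  shows "e \<le> m \<Longrightarrow> z \<in> carrier G \<Longrightarrow> z [^] (int p ^ e) = \<one> \<Longrightarrow> z \<in> generate G {x [^] (int p ^ (m - e))}"
proof (induction e arbitrary: z)
  case 0
  then have "z = \<one>" by simp
  then show ?case using generate.one by blast
next
  case (Suc e)
  have p1: "1 < p" using p prime_gt_1_nat by blast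
  have m1: "m \<ge> 1" using Suc.prems by simp
  define u where "u = z [^] (int p ^ e)"
  have uc: "u \<in> carrier G" unfolding u_def using Suc.prems by simp
  have "u [^] (int p) = z [^] (int p ^ e * int p)" unfolding u_def using int_pow_pow Suc.prems by simp
  also have "\<dots> = \<one>" using Suc.prems(3) by (simp add: mult.commute)
  finally have up: "u [^] (int p) = \<one>" .
  have ub: "u \<in> generate G {b}" using star[OF uc up] .
  define w where "w = x [^] (int p ^ (m - 1))"
  have wc: "w \<in> carrier G" unfolding w_def using x by simp
  have "w [^] (int p) = x [^] (int p ^ (m - 1) * int p)" unfolding w_def using int_pow_pow x by simp
  also have "\<dots> = x [^] (int p ^ m)"
  proof -
    have "int p ^ (m - 1) * int p = int p ^ m" using m1 by (cases m) (auto simp: mult.commute)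
    then show ?thesis by simp
  qed
  also have "\<dots> = \<one>" using int_pow_eq_id[OF x] ordx by simp
  finally have wp: "w [^] (int p) = \<one>" .
  have w1: "w \<noteq> \<one>"
  proof
    assume "w = \<one>"
    then have "int (p ^ m) dvd int p ^ (m - 1)" using int_pow_eq_id[OF x] ordx unfolding w_def by simp
    then have "p ^ m dvd p ^ (m - 1)" by (metis of_nat_dvd_iff of_nat_power)
    then have "p ^ m \<le> p ^ (m - 1)" using p1 by (simp add: dvd_imp_le)
    then have "m \<le> m - 1" using power_le_imp_le_exp p1 by blast
    then show False using m1 by simp
  qed
  have wb: "w \<in> generate G {b}" using star[OF wc wp] .
  have "u \<in> generate G {w}" by (rule Z_lemma[OF p b ub wb up wp w1])
  then obtain t where t: "u = w [^] (t::int)" using gen_mem[OF wc] by blast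
  define d where "d = m - Suc e"
  have md: "m = Suc (d + e)" unfolding d_def using Suc.prems by simp
  define v where "v = x [^] (int p ^ d)"
  have vc: "v \<in> carrier G" unfolding v_def using x by simp
  have "int p ^ (m - 1) = int p ^ d * int p ^ e" unfolding md by (simp add: power_add)
  then have wv: "w = v [^] (int p ^ e)" unfolding w_def v_def using int_pow_pow x by simp
  have uv: "u = (v [^] t) [^] (int p ^ e)"
    unfolding t wv using int_pow_pow vc by (simp add: mult.commute)
  define z' where "z' = z \<otimes> inv (v [^] t)"
  have z'c: "z' \<in> carrier G" unfolding z'_def using Suc.prems vc by simp
  have "z' [^] (int p ^ e) = z [^] (int p ^ e) \<otimes> inv (v [^] t) [^] (int p ^ e)"
    unfolding z'_def using int_pow_distrib Suc.prems vc by simp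
  also have "\<dots> = u \<otimes> inv u"
  proof -
    have "inv (v [^] t) [^] (int p ^ e) = inv u" using uv int_pow_inv vc by simp
    then show ?thesis using u_def by simp
  qed
  also have "\<dots> = \<one>" using uc by simp
  finally have z'p: "z' [^] (int p ^ e) = \<one>" .
  have "z' \<in> generate G {x [^] (int p ^ (m - e))}" using Suc.IH Suc.prems z'c z'p by simp
  moreover have xv: "x [^] (int p ^ (m - e)) = v [^] (int p)"
  proof -
    have "int p ^ (m - e) = int p ^ d * int p" unfolding md by (simp add: mult.commute)
    then show ?thesis unfolding v_def using int_pow_pow x by simp
  qed
  ultimately have "z' \<in> generate G {v [^] (int p)}" by simp
  then obtain k where k: "z' = (v [^] (int p)) [^] (k::int)" using gen_mem[of "v [^] (int p)"] vc by blast
  have "z = z' \<otimes> v [^] t" unfolding z'_def using Suc.prems vc by (simp add: m_assoc)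
  also have "\<dots> = v [^] (int p * k + t)" unfolding k using int_pow_pow int_pow_mult vc by simp
  finally have "z \<in> generate G {v}" using gen_mem vc by blast
  then show ?case unfolding v_def d_def .
qed

end


context comm_group begin

lemma abelian_key:
  assumes fin: "finite (carrier G)" and p: "Factorial_Ring.prime (p::nat)"
    and b: "b \<in> carrier G" and b1: "b \<noteq> \<one>" and bp: "b [^] (int p) = \<one>"
    and hyp: "\<forall>\<alpha>\<in>carrier G. \<exists>\<xi>\<in>carrier G. \<alpha> \<in> generate G {\<xi>} \<and> b \<in> generate G {\<xi>}"
  shows "\<exists>P. sylow_subgroup G p P \<and> card P > 1 \<and> cyclic_group (subgroup_generated G P)"
proof -
  have star: "z \<in> generate G {b}" if zc: "z \<in> carrier G" and zp: "z [^] (int p) = \<one>" for z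
  proof -
    obtain \<xi> where xi: "\<xi> \<in> carrier G" "z \<in> generate G {\<xi>}" "b \<in> generate G {\<xi>}" using hyp zc by blast
    show ?thesis by (rule Z_lemma[OF p xi(1) xi(2) xi(3) zp bp b1])
  qed
  have p1: "1 < p" using p prime_gt_1_nat by blast
  have bpn: "b [^] p = \<one>" using bp by (simp add: int_pow_int)
  then have "ord b dvd p" using pow_eq_id[OF b] by simp
  moreover have "ord b \<noteq> 1"
  proof
    assume "ord b = 1"
    then have "b [^] (1::nat) = \<one>" by (intro iffD2[OF pow_eq_id[OF b]]) simp
    moreover have "b [^] (1::nat) = b" using b by (simp add: l_one)
    ultimately show False using b1 by simp
  qed
  ultimately have "ord b = p" using p unfolding prime_nat_iff by auto
  then have pdvd: "p dvd order G" using ord_dvd_group_order[OF b] by simp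
  define a where "a = multiplicity p (order G)"
  have "p ^ a dvd order G" unfolding a_def by (rule multiplicity_dvd)
  then have og: "order G = p ^ a * (order G div p ^ a)" by simp
  obtain P where P: "subgroup P G" "card P = p ^ a" using sylow_thm[OF p is_group og fin] by blast
  have og0: "order G > 0" using fin by (simp add: order_gt_0_iff_finite)
  have nu: "\<not> is_unit p" using p1 by simp
  have a1: "a > 0" unfolding a_def
    by (rule iffD2[OF multiplicity_gt_zero_iff[of "order G" p]]) (use og0 nu pdvd in auto)
  have cP: "card P > 1" unfolding P(2) by (rule one_less_power[OF p1 a1])
  have syl: "sylow_subgroup G p P" unfolding sylow_subgroup_def a_def[symmetric] using p P by simp
  have Psub: "P \<subseteq> carrier G" using P(1) subgroup.subset by blast
  have finP: "finite P" using Psub fin finite_subset by blast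
  have ordP: "ord y dvd p ^ a" if y: "y \<in> P" for y
  proof -
    have gP: "group (G\<lparr>carrier := P\<rparr>)" using subgroup_imp_group[OF P(1)] .
    have "y [^]\<^bsub>G\<lparr>carrier := P\<rparr>\<^esub> order (G\<lparr>carrier := P\<rparr>) = \<one>\<^bsub>G\<lparr>carrier := P\<rparr>\<^esub>"
      using group.pow_order_eq_1[OF gP] y by simp
    then have "y [^] card P = \<one>" unfolding order_def by (simp add: nat_pow_consistent[symmetric])
    moreover have yc: "y \<in> carrier G" using y Psub by blast
    ultimately have "ord y dvd card P" using pow_eq_id[OF yc, of "card P"] by simp
    then show ?thesis unfolding P(2) .
  qed
  have "\<one> \<in> P" using P(1) subgroup.one_closed by blast
  then have Pne: "ord ` P \<noteq> {}" by (simp add: image_is_empty ex_in_conv[symmetric]) blast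
  have "Max (ord ` P) \<in> ord ` P" by (rule Max_in[OF finite_imageI[OF finP] Pne])
  then obtain x where x0: "Max (ord ` P) = ord x" "x \<in> P" by (rule imageE)
  have x: "x \<in> P" "ord x = Max (ord ` P)" using x0 by simp_all
  have xmax: "ord y \<le> ord x" if "y \<in> P" for y
  proof -
    have "ord y \<le> Max (ord ` P)" by (rule Max_ge[OF finite_imageI[OF finP]]) (use that in blast)
    then show ?thesis using x(2) by simp
  qed
  have xc: "x \<in> carrier G" using x Psub by blast
  obtain m where m: "m \<le> a" "ord x = p ^ m" using divides_primepow_nat[OF p, THEN iffD1, OF ordP[OF x(1)]] by blast
  have yP: "y [^] (int p ^ m) = \<one>" if y: "y \<in> P" for y
  proof -
    obtain s where s: "s \<le> a" "ord y = p ^ s" using divides_primepow_nat[OF p, THEN iffD1, OF ordP[OF y]] by blast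
    have "p ^ s \<le> p ^ m" using xmax[OF y] s m by simp
    then have "s \<le> m" by (rule power_le_imp_le_exp[OF p1])
    then have "p ^ s dvd p ^ m" by (rule le_imp_power_dvd)
    then have "int (ord y) dvd int (p ^ m)" unfolding s(2) by (simp only: int_dvd_int_iff)
    then have d: "int (ord y) dvd int p ^ m" by simp
    have yc: "y \<in> carrier G" using y Psub by blast
    show ?thesis by (rule iffD2[OF int_pow_eq_id[OF yc] d])
  qed
  have "P \<subseteq> generate G {x}"
  proof
    fix y assume y: "y \<in> P"
    have yc: "y \<in> carrier G" using y Psub by blast
    have "y \<in> generate G {x [^] (int p ^ (m - m))}"
      by (rule tower[OF p xc m(2) star b, of m y]) (simp_all add: yc yP[OF y])
    then show "y \<in> generate G {x}" using xc by simp
  qed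
  moreover have "generate G {x} \<subseteq> P" by (rule generate_subgroup_incl[OF _ P(1)]) (simp add: x(1))
  ultimately have Px: "P = generate G {x}" by (rule equalityI)
  have gP: "generate G P = P"
  proof
    show "generate G P \<subseteq> P" by (rule generate_subgroup_incl[OF subset_refl P(1)])
    show "P \<subseteq> generate G P"
    proof
      fix y assume "y \<in> P" then show "y \<in> generate G P" by (rule generate.incl)
    qed
  qed
  have i1: "carrier G \<inter> P = P" using Psub by blast
  have i2: "carrier G \<inter> {x} = {x}" using xc by blast
  have "subgroup_generated G P = subgroup_generated G {x}"
    unfolding subgroup_generated_def i1 i2 gP Px[symmetric] ..
  then have "cyclic_group (subgroup_generated G P)" using cyclic_group_generated by simp
  then show ?thesis using syl cP by blast
qed

end


context comm_group begin

lemma final_abs: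
  assumes fin: "finite (carrier G)" and be: "\<beta> \<in> carrier G" and b1: "\<beta> \<noteq> \<one>"
    and hyp: "\<forall>\<alpha>\<in>carrier G. \<exists>\<xi>\<in>carrier G. \<alpha> \<in> generate G {\<xi>} \<and> \<beta> \<in> generate G {\<xi>}"
  shows "\<exists>p P. sylow_subgroup G p P \<and> card P > 1 \<and> cyclic_group (subgroup_generated G P)"
proof -
  define n where "n = ord \<beta>"
  have n1: "n \<ge> 1" unfolding n_def using ord_ge_1[OF fin be] .
  have nn1: "n \<noteq> 1"
  proof
    assume "n = 1"
    then have "\<beta> [^] (1::nat) = \<one>" unfolding n_def by (intro iffD2[OF pow_eq_id[OF be]]) simp
    moreover have "\<beta> [^] (1::nat) = \<beta>" using be by (simp add: l_one)
    ultimately show False using b1 by simp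
  qed
  obtain p where p: "Factorial_Ring.prime (p::nat)" "p dvd n" using prime_factor_nat[OF nn1] by blast
  have p1: "1 < p" using p(1) prime_gt_1_nat by blast
  define q where "q = n div p"
  have nq: "n = q * p" unfolding q_def using p(2) by simp
  have q0: "0 < q" using nq n1 by (cases q) auto
  have qn: "q < n" using nq p1 q0 by simp
  define b where "b = \<beta> [^] (int q)"
  have bc: "b \<in> carrier G" unfolding b_def using be by simp
  have "b [^] (int p) = \<beta> [^] (int q * int p)" unfolding b_def using int_pow_pow be by simp
  also have "\<dots> = \<one>" using int_pow_eq_id[OF be] unfolding n_def[symmetric] nq by simp
  finally have bp: "b [^] (int p) = \<one>" .
  have bb1: "b \<noteq> \<one>"
  proof
    assume "b = \<one>"
    then have "int n dvd int q" using int_pow_eq_id[OF be] unfolding b_def n_def by simp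
    then have "n dvd q" by simp
    then show False using q0 qn by (simp add: nat_dvd_not_less)
  qed
  have hyp': "\<forall>\<alpha>\<in>carrier G. \<exists>\<xi>\<in>carrier G. \<alpha> \<in> generate G {\<xi>} \<and> b \<in> generate G {\<xi>}"
  proof
    fix \<alpha> assume "\<alpha> \<in> carrier G"
    then obtain \<xi> where xi: "\<xi> \<in> carrier G" "\<alpha> \<in> generate G {\<xi>}" "\<beta> \<in> generate G {\<xi>}" using hyp by blast
    have "b \<in> generate G {\<xi>}" unfolding b_def
      by (rule subgroup_int_pow_closed[OF generate_is_subgroup xi(3)]) (use xi(1) in simp)
    then show "\<exists>\<xi>\<in>carrier G. \<alpha> \<in> generate G {\<xi>} \<and> b \<in> generate G {\<xi>}" using xi by blast
  qed
  show ?thesis using abelian_key[OF fin p(1) bc bb1 bp hyp'] by blast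
qed

lemma conj_gen:
  assumes x: "x \<in> carrier G" and n: "n \<in> carrier G" and g: "g \<in> carrier G"
    and e: "x \<otimes> n = g \<otimes> x [^] (k::int) \<otimes> inv g"
  shows "n \<in> generate G {x}"
proof -
  have "g \<otimes> x [^] k \<otimes> inv g = x [^] k \<otimes> g \<otimes> inv g" using g x by (simp add: m_comm)
  also have "\<dots> = x [^] k" using g x by (simp add: m_assoc)
  finally have "g \<otimes> x [^] k \<otimes> inv g = x [^] k" .
  then have e2: "x \<otimes> n = x [^] k" using e by simp
  have "n = inv x \<otimes> (x \<otimes> n)" using x n by (simp add: m_assoc[symmetric])
  also have "\<dots> = inv x \<otimes> x [^] k" using e2 by simp
  finally have ne: "n = inv x \<otimes> x [^] k" .
  have sg: "subgroup (generate G {x}) G" using generate_is_subgroup x by simp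
  have "x \<in> generate G {x}" by (rule generate.incl) simp
  then have "inv x \<in> generate G {x}" using subgroup.m_inv_closed[OF sg] by blast
  moreover have "x [^] k \<in> generate G {x}" using gen_mem x by blast
  ultimately show ?thesis unfolding ne using subgroup.m_closed[OF sg] by blast
qed

end


theorem theorem1p2:
  fixes G :: "('a, 'b) monoid_scheme" and N :: "'a set"
  assumes "group G"
    and "finite (carrier G)"
    and "\<forall>p P. sylow_subgroup (G Mod derived G (carrier G)) p P \<and> card P > 1
             \<longrightarrow> \<not> cyclic_group (subgroup_generated (G Mod derived G (carrier G)) P)"
    and "N \<lhd> G"
    and "eta G = eta (G Mod N)"
  shows "N \<subseteq> derived G (carrier G)"
proof (rule ccontr)
  assume nsub: "\<not> N \<subseteq> derived G (carrier G)"
  let ?D = "derived G (carrier G)"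
  let ?Q = "G Mod ?D"
  interpret G: group G by fact
  have nD: "?D \<lhd> G" by (rule G.derived_self_is_normal)
  interpret D: normal ?D G by (rule nD)
  interpret Q: comm_group ?Q by (rule G.derived_quot_is_comm_group)
  interpret NN: normal N G by fact
  define \<pi> where "\<pi> = (\<lambda>a. ?D #>\<^bsub>G\<^esub> a)"
  have hom: "\<pi> \<in> hom G ?Q" unfolding \<pi>_def by (rule D.r_coset_hom_Mod)
  interpret h: group_hom G ?Q \<pi> using hom by unfold_locales
  obtain n0 where n0: "n0 \<in> N" "n0 \<notin> ?D" using nsub by blast
  have n0c: "n0 \<in> carrier G" using n0(1) NN.subset by blast
  have finQ: "finite (carrier ?Q)" unfolding FactGroup_def RCOSETS_def using assms(2) by simp
  have bc: "\<pi> n0 \<in> carrier ?Q" using h.hom_closed[OF n0c] .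
  have b1: "\<pi> n0 \<noteq> \<one>\<^bsub>?Q\<^esub>"
  proof
    assume "\<pi> n0 = \<one>\<^bsub>?Q\<^esub>"
    then have "?D #>\<^bsub>G\<^esub> n0 = ?D" unfolding \<pi>_def by (simp add: FactGroup_def)
    then have "n0 \<in> ?D" using G.coset_join1[OF _ n0c D.subgroup_axioms] by blast
    then show False using n0(2) by blast
  qed
  have hypQ: "\<forall>\<alpha>\<in>carrier ?Q. \<exists>\<xi>\<in>carrier ?Q. \<alpha> \<in> generate ?Q {\<xi>} \<and> \<pi> n0 \<in> generate ?Q {\<xi>}"
  proof
    fix \<alpha> assume "\<alpha> \<in> carrier ?Q"
    then have "\<alpha> \<in> rcosets\<^bsub>G\<^esub> ?D" unfolding FactGroup_def by simp
    then obtain a where a: "a \<in> carrier G" "\<alpha> = \<pi> a" unfolding \<pi>_def RCOSETS_def by blast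
    obtain x where x: "x \<in> carrier G" "a \<in> generate G {x}"
      and xn: "\<forall>n\<in>N. \<exists>g\<in>carrier G. \<exists>k::int. x \<otimes>\<^bsub>G\<^esub> n = g \<otimes>\<^bsub>G\<^esub> x [^]\<^bsub>G\<^esub> k \<otimes>\<^bsub>G\<^esub> inv\<^bsub>G\<^esub> g"
      using key_elem[OF assms(1,2,4,5) a(1)] by blast
    have gx: "\<pi> ` generate G {x} = generate ?Q {\<pi> x}" unfolding \<pi>_def by (rule quot_gen[OF nD x(1)])
    have am: "\<alpha> \<in> generate ?Q {\<pi> x}" using a(2) x(2) gx by blast
    obtain g k where g: "g \<in> carrier G" "x \<otimes>\<^bsub>G\<^esub> n0 = g \<otimes>\<^bsub>G\<^esub> x [^]\<^bsub>G\<^esub> (k::int) \<otimes>\<^bsub>G\<^esub> inv\<^bsub>G\<^esub> g"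
      using xn n0(1) by blast
    have "\<pi> (x \<otimes>\<^bsub>G\<^esub> n0) = \<pi> (g \<otimes>\<^bsub>G\<^esub> x [^]\<^bsub>G\<^esub> k \<otimes>\<^bsub>G\<^esub> inv\<^bsub>G\<^esub> g)" using g(2) by simp
    then have e: "\<pi> x \<otimes>\<^bsub>?Q\<^esub> \<pi> n0 = \<pi> g \<otimes>\<^bsub>?Q\<^esub> (\<pi> x) [^]\<^bsub>?Q\<^esub> k \<otimes>\<^bsub>?Q\<^esub> inv\<^bsub>?Q\<^esub> (\<pi> g)"
      using x(1) n0c g(1) by (simp add: h.hom_int_pow h.hom_inv)
    have "\<pi> n0 \<in> generate ?Q {\<pi> x}"
      by (rule Q.conj_gen[OF h.hom_closed[OF x(1)] bc h.hom_closed[OF g(1)] e])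
    then show "\<exists>\<xi>\<in>carrier ?Q. \<alpha> \<in> generate ?Q {\<xi>} \<and> \<pi> n0 \<in> generate ?Q {\<xi>}"
      using am h.hom_closed[OF x(1)] by blast
  qed
  obtain p P where P: "sylow_subgroup ?Q p P" "card P > 1" "cyclic_group (subgroup_generated ?Q P)"
    using Q.final_abs[OF finQ bc b1 hypQ] by blast
  then show False using assms(3) by blast
qed


end
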